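(* Let $p$ be a prime, $w\ge1$, and $\mu>0$ a real number with $2^\mu$ an integer. Let $c_\mu=\frac{2^\mu\sin(\pi/2^\mu)}{p\sin(\pi/p)}$. For any sets $A_1,\dots,A_{2^\mu}\subseteq\mathbb{F}_{p^w}$ with $\sum_{i=1}^{2^\mu}|A_i|=p^w$, \[ \sum_{i=1}^{2^\mu}\left|\widehat{\mathbb 1_{A_i}}(\alpha)\right|\le c_\mu\ \text{ if }\alpha\ne0,\qquad \sum_{i=1}^{2^\mu}\left|\widehat{\mathbb 1_{A_i}}(0)\right|=1. \]
   Context: For $A\subseteq\mathbb{F}_{p^w}$, $\mathbb 1_A$ is its characteristic function. $\mathrm{Tr}$ is the trace $\mathbb{F}_{p^w}\to\mathbb{F}_p$ (values in $\{0,\dots,p-1\}$), $\omega_p=e^{2\pi\mathbf i/p}$, and $\hat f(\alpha)=p^{-w}\sum_{x\in\mathbb{F}_{p^w}}f(x)\omega_p^{\mathrm{Tr}(\alpha x)}$. *)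

theory Defs
  imports "HOL-Analysis.Analysis"
begin

definition trace_nat :: "nat \<Rightarrow> nat \<Rightarrow> 'a::{field,finite} \<Rightarrow> nat" where
  "trace_nat p w x = (THE k. k < p \<and> of_nat k = (\<Sum>i<w. x ^ (p ^ i)))"

definition omega :: "nat \<Rightarrow> complex" where
  "omega p = exp (2 * of_real pi * \<i> / of_nat p)"

definition fourier :: "nat \<Rightarrow> nat \<Rightarrow> ('a::{field,finite} \<Rightarrow> complex) \<Rightarrow> 'a \<Rightarrow> complex" where
  "fourier p w f \<alpha> = (1 / of_nat (p ^ w)) * (\<Sum>x\<in>UNIV. f x * omega p ^ trace_nat p w (\<alpha> * x))"

definition ind :: "'a set \<Rightarrow> 'a \<Rightarrow> complex" where
  "ind A x = (if x \<in> A then 1 else 0)"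

end

theory Submission imports Defs "HOL-Number_Theory.Number_Theory" "HOL-Computational_Algebra.Polynomial" begin

lemma incr_piece:
  fixes f f' :: "real \<Rightarrow> real"
  assumes "u \<le> s" "s \<le> t" "t \<le> v"
    and "\<And>x. u \<le> x \<Longrightarrow> x \<le> v \<Longrightarrow> f' x \<ge> 0"
    and "\<And>x. (f has_real_derivative f' x) (at x)"
  shows "f s \<le> f t"
proof (rule DERIV_nonneg_imp_increasing_open[OF \<open>s \<le> t\<close>])
  show "\<exists>y. (f has_real_derivative y) (at x) \<and> 0 \<le> y" if "s < x" "x < t" for x
    using assms that by (intro exI[of _ "f' x"]) auto
  show "continuous_on {s..t} f"
    using assms(5) by (meson DERIV_isCont continuous_at_imp_continuous_on)
qed

lemma cos_le_outer:
  fixes a x :: real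
  assumes "0 \<le> a" "a \<le> pi" "a \<le> x" "x \<le> 2*pi - a"
  shows "cos x \<le> cos a"
proof (cases "x \<le> pi")
  case True thus ?thesis using assms by (subst cos_mono_le_eq) auto
next
  case False
  have "cos x = cos (2*pi - x)" by (metis cos_2pi_minus)
  also have "\<dots> \<le> cos a" using assms False by (subst cos_mono_le_eq) auto
  finally show ?thesis .
qed

lemma cos_ge_inner:
  fixes a x :: real
  assumes "a \<le> pi" "-a \<le> x" "x \<le> a"
  shows "cos a \<le> cos x"
proof -
  have "cos x = cos \<bar>x\<bar>" by (simp add: abs_real_def)
  also have "cos a \<le> cos \<bar>x\<bar>" using assms by (subst cos_mono_le_eq) auto
  finally show ?thesis by simp
qed

lemma core:
  fixes a b :: real and p :: nat and L :: "nat set"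
  assumes p2: "2 \<le> p" and L: "L \<subseteq> {..<p}" and a: "a = pi * card L / p"
    and b1: "a - 2*pi \<le> b" and b2: "b \<le> -a"
  shows "(\<Sum>j\<in>L. cos (b + pi/p + 2*pi*j/p)) \<le> sin a / sin (pi/p)"
proof -
  have finL: "finite L" using L finite_subset by blast
  have cardL: "card L \<le> p" using card_mono[OF _ L] by simp
  have a0: "0 \<le> a" using a by simp
  have api: "a \<le> pi"
  proof -
    have "pi * card L / p \<le> pi * p / p"
      using cardL p2 by (intro divide_right_mono mult_left_mono) auto
    thus ?thesis using a p2 by simp
  qed
  define l where "l = cos a"
  define K where "K = 2 * sin a - 2 * a * l"
  define G1 where "G1 = (\<lambda>t::real. sin t - l * t)"
  define G2 where "G2 = (\<lambda>t::real. - sin t + l * t)"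
  define F where "F = (\<lambda>t::real. if t \<le> -a then 0 else if t \<le> a then G1 t - G1 (-a) else K)"
  have G1m: "G1 s \<le> G1 t" if "-a \<le> s" "s \<le> t" "t \<le> a" for s t
    unfolding G1_def
    by (rule incr_piece[where u="-a" and s=s and t=t and v=a and f="\<lambda>t. sin t - l * t" and f'="\<lambda>x. cos x - l"])
       (use that api in \<open>auto simp: l_def intro!: cos_ge_inner derivative_eq_intros\<close>)
  have G2m: "G2 s \<le> G2 t" if "s \<le> t" "(a - 2*pi \<le> s \<and> t \<le> -a) \<or> (a \<le> s \<and> t \<le> 2*pi - a)" for s t
  proof -
    have c: "cos x \<le> l" if "a - 2*pi \<le> x" "x \<le> -a" for x
    proof -
      have "cos x = cos (x + 2*pi)" by simp
      also have "\<dots> \<le> l" unfolding l_def using that a0 api by (intro cos_le_outer) auto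
      finally show ?thesis .
    qed
    show ?thesis using that(2)
    proof
      assume h: "a - 2*pi \<le> s \<and> t \<le> -a"
      show ?thesis unfolding G2_def
        by (rule incr_piece[where u="a - 2*pi" and s=s and t=t and v="-a" and f="\<lambda>t. - sin t + l * t" and f'="\<lambda>x. l - cos x"])
           (use that h c in \<open>auto intro!: derivative_eq_intros\<close>)
    next
      assume h: "a \<le> s \<and> t \<le> 2*pi - a"
      show ?thesis unfolding G2_def
        by (rule incr_piece[where u=a and s=s and t=t and v="2*pi - a" and f="\<lambda>t. - sin t + l * t" and f'="\<lambda>x. l - cos x"])
           (use that h a0 api in \<open>auto simp: l_def intro!: cos_le_outer derivative_eq_intros\<close>)
    qed
  qed
  have KG: "K = G1 a - G1 (-a)" unfolding K_def G1_def by simp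
  have G12: "G2 t = - G1 t" for t unfolding G1_def G2_def by simp
  have Fm: "F s \<le> F t" if "s \<le> t" for s t
  proof -
    have "G1 (-a) \<le> G1 a" using G1m a0 by auto
    thus ?thesis unfolding F_def using that G1m[of s t] G1m[of "-a" t] G1m[of s a] KG
      by (auto simp: not_le)
  qed
  have Dm: "F s - sin s + l * s \<le> F t - sin t + l * t"
    if "b \<le> s" "s \<le> t" "t \<le> b + 2*pi" for s t
  proof -
    have e: "F x - sin x + l * x = (if x \<le> -a then G2 x else if x \<le> a then - G1 (-a) else K + G2 x)" for x
      unfolding F_def G1_def G2_def by auto
    have q1: "G2 (-a) = - G1 (-a)" "K + G2 a = - G1 (-a)" using KG G12 by auto
    show ?thesis unfolding e using that b1 b2
      using G2m[of s t] G2m[of s "-a"] G2m[of a t] q1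
      by (auto simp: not_le)
  qed
  define s where "s = sin (pi / p)"
  define P where "P = (\<lambda>j::nat. b + 2*pi*j/p)"
  have pp: "real p > 0" using p2 by simp
  have ident: "2 * s * cos (b + pi/p + 2*pi*j/p) = sin (P (Suc j)) - sin (P j)" for j
  proof -
    have "P (Suc j) = (b + pi/p + 2*pi*j/p) + pi/p" "P j = (b + pi/p + 2*pi*j/p) - pi/p"
      unfolding P_def using pp by (auto simp: field_simps)
    thus ?thesis unfolding s_def by (simp only: sin_add sin_diff) (simp add: algebra_simps)
  qed
  have Pin: "b \<le> P j \<and> P j \<le> b + 2*pi" if "j \<le> p" for j
  proof -
    have "2*pi*j/p \<le> 2*pi*p/p" using that pp by (intro divide_right_mono mult_left_mono) auto
    thus ?thesis unfolding P_def using pp by simp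
  qed
  have stepP: "P (Suc j) - P j = 2*pi/p" for j unfolding P_def by (simp add: field_simps add_divide_distrib)
  have ineqL: "2 * s * cos (b + pi/p + 2*pi*j/p) - l * (2*pi/p) \<le> F (P (Suc j)) - F (P j)"
    if "j < p" for j
  proof -
    have "P j \<le> P (Suc j)" using stepP[of j] pp by (simp add: algebra_simps)
    hence "F (P j) - sin (P j) + l * P j \<le> F (P (Suc j)) - sin (P (Suc j)) + l * P (Suc j)"
      using Dm[of "P j" "P (Suc j)"] Pin[of j] Pin[of "Suc j"] that by auto
    hence "sin (P (Suc j)) - sin (P j) - l * (P (Suc j) - P j) \<le> F (P (Suc j)) - F (P j)"
      by (simp add: algebra_simps)
    thus ?thesis using ident[of j] stepP[of j] by simp
  qed
  have "(\<Sum>j\<in>L. 2 * s * cos (b + pi/p + 2*pi*j/p) - l * (2*pi/p)) \<le> (\<Sum>j\<in>L. F (P (Suc j)) - F (P j))"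
    using ineqL L by (intro sum_mono) auto
  also have "\<dots> \<le> (\<Sum>j<p. F (P (Suc j)) - F (P j))"
  proof (intro sum_mono2)
    show "0 \<le> F (P (Suc j)) - F (P j)" for j
      using Fm[of "P j" "P (Suc j)"] stepP[of j] pp by (simp add: algebra_simps)
  qed (use L in auto)
  also have "\<dots> = F (P p) - F (P 0)" by (rule sum_lessThan_telescope)
  also have "F (P p) = K"
  proof -
    have "P p = b + 2*pi" unfolding P_def using pp by simp
    moreover have "a \<le> b + 2*pi" using b1 by simp
    moreover have "G1 a = G1 (-a)" if "a \<le> -a"
    proof -
      have "a = -a" using that a0 by simp
      thus ?thesis by metis
    qed
    moreover have "G1 (b + 2*pi) = G1 a" if "b + 2*pi \<le> a"
    proof -
      have "b + 2*pi = a" using that b1 by simp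
      thus ?thesis by metis
    qed
    ultimately show ?thesis unfolding F_def using b1 b2 KG by auto
  qed
  also have "F (P 0) = 0" unfolding P_def F_def using b2 by simp
  finally have "2 * s * (\<Sum>j\<in>L. cos (b + pi/p + 2*pi*j/p)) - l * (2*pi/p) * card L \<le> K"
    by (simp add: sum_subtractf sum_distrib_left mult.commute mult.left_commute)
  moreover have "l * (2*pi/p) * card L = 2 * a * l" unfolding a by simp
  ultimately have "2 * s * (\<Sum>j\<in>L. cos (b + pi/p + 2*pi*j/p)) \<le> 2 * sin a"
    unfolding K_def by simp
  moreover have "s > 0" unfolding s_def using p2 by (intro sin_gt_zero) (auto simp: field_simps)
  ultimately show ?thesis unfolding s_def[symmetric] by (simp add: field_simps)
qed


lemma cos_shift_int: "cos ((x::real) + 2*pi* of_int (d::int)) = cos x"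
  by (simp add: cos_add)

lemma cos_subset_bound:
  fixes \<phi> :: real and p :: nat and L :: "nat set"
  assumes p2: "2 \<le> p" and L: "L \<subseteq> {..<p}" and m: "card L < p"
  shows "(\<Sum>j\<in>L. cos (\<phi> + 2*pi*j/p)) \<le> sin (pi * card L / p) / sin (pi/p)"
proof -
  define a where "a = pi * card L / p"
  have pp: "real p > 0" using p2 by simp
  define r :: int where "r = \<lceil>(a - 2*pi - \<phi> + pi/p) * p / (2*pi)\<rceil>"
  define b where "b = \<phi> - pi/p + 2*pi*r/p"
  have r1: "(a - 2*pi - \<phi> + pi/p) * p / (2*pi) \<le> r" unfolding r_def by linarith
  have r2: "r < (a - 2*pi - \<phi> + pi/p) * p / (2*pi) + 1" unfolding r_def by linarith
  have b1: "a - 2*pi \<le> b"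
  proof -
    have "(a - 2*pi - \<phi> + pi/p) * p \<le> r * (2*pi)" using r1 by (simp add: field_simps)
    hence "a - 2*pi - \<phi> + pi/p \<le> 2*pi*r/p" using pp by (simp add: field_simps)
    thus ?thesis unfolding b_def by simp
  qed
  have b2: "b \<le> -a"
  proof -
    have h1: "r * (2*pi) < (a - 2*pi - \<phi> + pi/p) * p + 2*pi" using r2 by (simp add: field_simps)
    have X: "(a - 2*pi - \<phi> + pi/p) * p = a*p - 2*pi*p - \<phi>*p + pi" using pp by (simp add: field_simps)
    have bp: "b * p = \<phi>*p - pi + 2*pi*r" unfolding b_def using pp by (simp add: field_simps)
    have ap: "a * p \<le> pi*p - pi"
    proof -
      have "real (card L) \<le> real p - 1" using m by linarith
      hence "pi * card L \<le> pi * (real p - 1)" by (intro mult_left_mono) auto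
      thus ?thesis unfolding a_def using pp by (simp add: algebra_simps)
    qed
    have h1': "2*pi*r < (a - 2*pi - \<phi> + pi/p) * p + 2*pi" using h1 by (simp add: mult.commute)
    have "b * p \<le> -(a * p)" using h1' X bp ap by linarith
    show ?thesis
    proof (rule ccontr)
      assume "\<not> b \<le> -a"
      hence "(-a) * p < b * p" using pp by (intro mult_strict_right_mono) auto
      thus False using \<open>b * p \<le> -(a * p)\<close> by linarith
    qed
  qed
  define \<sigma> where "\<sigma> = (\<lambda>j::nat. nat ((int j - r) mod int p))"
  have sig_lt: "\<sigma> j < p" for j unfolding \<sigma>_def using pp by (simp add: nat_less_iff)
  have sig_cos: "cos (\<phi> + 2*pi*j/p) = cos (b + pi/p + 2*pi*\<sigma> j/p)" for j
  proof -
    define d where "d = (int j - r) div int p"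
    define q where "q = (int j - r) mod int p"
    have q0: "q \<ge> 0" unfolding q_def using pp by simp
    have "int j - r = int p * d + q" unfolding d_def q_def by simp
    hence "int j = r + int p * d + q" by simp
    hence "(of_int (int j) :: real) = of_int (r + int p * d + q)" by (simp only:)
    hence "real j = of_int r + real p * of_int d + of_int q" by simp
    hence e: "\<phi> + 2*pi*j/p = (b + pi/p + 2*pi*\<sigma> j/p) + 2*pi* of_int d"
      unfolding b_def \<sigma>_def q_def[symmetric] using pp q0 by (simp add: field_simps)
    show ?thesis unfolding e by (rule cos_shift_int)
  qed
  have inj: "inj_on \<sigma> L"
  proof
    fix x y assume xy: "x \<in> L" "y \<in> L" "\<sigma> x = \<sigma> y"
    hence "(int x - r) mod int p = (int y - r) mod int p"
      unfolding \<sigma>_def using pp by (simp add: eq_nat_nat_iff)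
    hence "((int x - r) + r) mod int p = ((int y - r) + r) mod int p" by (rule mod_add_cong) simp
    hence "int x mod int p = int y mod int p" by simp
    moreover have "x < p" "y < p" using xy L by auto
    ultimately show "x = y" by simp
  qed
  have "(\<Sum>j\<in>L. cos (\<phi> + 2*pi*j/p)) = (\<Sum>j\<in>L. cos (b + pi/p + 2*pi*\<sigma> j/p))"
    using sig_cos by simp
  also have "\<dots> = (\<Sum>j\<in>\<sigma> ` L. cos (b + pi/p + 2*pi*j/p))"
    by (simp add: sum.reindex[OF inj])
  also have "\<dots> \<le> sin a / sin (pi/p)"
    by (rule core[OF p2 _ _ b1 b2]) (use sig_lt card_image[OF inj] a_def in auto)
  finally show ?thesis unfolding a_def .
qed


lemma omega_pow: "omega p ^ j = cis (2*pi*j/p)"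
proof -
  have "omega p = cis (2*pi/p)" unfolding omega_def cis_conv_exp
    by (simp add: field_simps)
  hence "omega p ^ j = cis (2*pi/p) ^ j" by (simp only:)
  also have "\<dots> = cis (real j * (2*pi/p))" by (rule Complex.DeMoivre)
  finally have "omega p ^ j = cis (real j * (2*pi/p))" .
  thus ?thesis by (simp add: field_simps)
qed

lemma root_subset_bound:
  fixes p :: nat and L :: "nat set"
  assumes p2: "2 \<le> p" and L: "L \<subseteq> {..<p}"
  shows "cmod (\<Sum>j\<in>L. omega p ^ j) \<le> sin (pi * card L / p) / sin (pi/p)"
proof -
  have pp: "real p > 0" using p2 by simp
  have finL: "finite L" using L finite_subset by blast
  have cardL: "card L \<le> p" using card_mono[OF _ L] by simp
  have sp: "sin (pi/p) > 0" using p2 by (intro sin_gt_zero) (auto simp: field_simps)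
  have rhs0: "0 \<le> sin (pi * card L / p) / sin (pi/p)"
  proof -
    have "pi * card L / p \<le> pi * p / p"
      using cardL pp by (intro divide_right_mono mult_left_mono) auto
    hence "0 \<le> sin (pi * card L / p)" using pp by (intro sin_ge_zero) auto
    thus ?thesis using sp by simp
  qed
  show ?thesis
  proof (cases "card L = p")
    case True
    hence LL: "L = {..<p}" using L by (intro card_subset_eq) auto
    define \<omega> where "\<omega> = omega p"
    have w1: "\<omega> ^ p = 1" unfolding \<omega>_def omega_pow using pp by simp
    have wne: "\<omega> \<noteq> 1"
    proof
      assume "\<omega> = 1"
      hence "Re (\<omega> ^ 1) = 1" by simp
      hence "cos (2*pi/p) = 1" unfolding \<omega>_def omega_pow by simp
      moreover have "cos (2*pi/p) < cos 0"
        using p2 by (intro cos_monotone_0_pi) (auto simp: field_simps)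
      ultimately show False by simp
    qed
    have "(\<Sum>j<p. \<omega> ^ j) = (\<omega> ^ p - 1) / (\<omega> - 1)" by (rule geometric_sum[OF wne])
    also have "\<dots> = 0" using w1 by simp
    finally show ?thesis using rhs0 unfolding LL \<omega>_def by simp
  next
    case False
    hence m: "card L < p" using cardL by simp
    define z where "z = (\<Sum>j\<in>L. omega p ^ j)"
    have "z = rcis (cmod z) (Arg z)" by (simp add: rcis_cmod_Arg)
    hence "z * cis (- Arg z) = complex_of_real (cmod z)"
      by (metis cis_mult cis_zero mult.right_neutral rcis_def right_minus mult.assoc)
    hence "cmod z = Re (z * cis (- Arg z))" by (metis Re_complex_of_real)
    also have "\<dots> = (\<Sum>j\<in>L. Re (cis (2*pi*j/p) * cis (- Arg z)))"
      unfolding z_def omega_pow sum_distrib_right Re_sum ..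
    also have "\<dots> = (\<Sum>j\<in>L. cos (- Arg z + 2*pi*j/p))"
      by (simp add: cis_mult add.commute)
    also have "\<dots> \<le> sin (pi * card L / p) / sin (pi/p)"
      by (rule cos_subset_bound[OF p2 L m])
    finally show ?thesis unfolding z_def .
  qed
qed

definition tsum :: "nat \<Rightarrow> nat \<Rightarrow> 'a::field \<Rightarrow> 'a" where
  "tsum p w x = (\<Sum>i<w. x ^ (p ^ i))"

lemma char_eq:
  assumes "prime p" "CARD('a::{field,finite}) = p ^ w" "w \<ge> 1"
  shows "CHAR('a) = p"
proof -
  have pos: "CHAR('a) > 0" by (rule finite_imp_CHAR_pos) simp
  have pr: "prime CHAR('a)" by (rule prime_CHAR_semidom[OF pos])
  have "CHAR('a) dvd p ^ w" using CHAR_dvd_CARD[where 'a='a] assms(2) by simp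
  hence "CHAR('a) dvd p" using pr prime_dvd_power by blast
  thus ?thesis using pr assms(1) primes_dvd_imp_eq by blast
qed

lemma pow_card_same:
  fixes x :: "'a :: {field,finite}"
  shows "x ^ card (UNIV :: 'a set) = x"
proof (cases "x = 0")
  case False
  have "x * (\<Prod>y\<in>UNIV-{0}. x * y) = x * x ^ (card (UNIV :: 'a set) - 1) * \<Prod>(UNIV-{0})"
    by (simp add: prod.distrib mult_ac)
  also have "x * x ^ (card (UNIV :: 'a set) - 1) = x ^ Suc (card (UNIV :: 'a set) - 1)"
    by (subst power_Suc) auto
  also have "Suc (card (UNIV :: 'a set) - 1) = card (UNIV :: 'a set)"
    using finite_UNIV_card_ge_0[where ?'a = 'a] by simp
  also have "(\<Prod>y\<in>UNIV-{0}. x * y) = (\<Prod>y\<in>UNIV-{0}. y)"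
    by (rule prod.reindex_bij_witness[of _ "\<lambda>y. y / x" "\<lambda>y. x * y"]) (use False in auto)
  finally show ?thesis
    by simp
qed (use finite_UNIV_card_ge_0[where ?'a = 'a] in auto)

locale ffield =
  fixes p w :: nat and ty :: "'a::{field,finite} itself"
  assumes pr: "prime p" and w1: "w \<ge> 1" and card: "CARD('a) = p ^ w"
begin

lemma charp: "CHAR('a) = p" using char_eq[OF pr card w1] .
lemma p2: "p \<ge> 2" using pr prime_ge_2_nat by blast

lemma tsum_frob: "(tsum p w (x::'a)) ^ p = tsum p w x"
proof -
  have prc: "prime CHAR('a)" using charp pr by simp
  have "(tsum p w x) ^ p = (\<Sum>i<w. (x ^ (p ^ i)) ^ p)"
    unfolding tsum_def by (rule freshmans_dream_sum[OF prc charp[symmetric]])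
  also have "\<dots> = (\<Sum>i<w. x ^ (p ^ Suc i))" by (simp add: power_mult[symmetric] mult.commute)
  also have "\<dots> + x ^ (p ^ 0) = (\<Sum>i<Suc w. x ^ (p ^ i))" by (simp only: sum.lessThan_Suc_shift) simp
  also have "\<dots> = tsum p w x + x ^ (p ^ w)" by (simp add: tsum_def)
  also have "x ^ (p ^ w) = x" using pow_card_same[of x] card by simp
  finally show ?thesis by simp
qed

lemma of_nat_inj_p:
  assumes "k1 < p" "k2 < p" "(of_nat k1 :: 'a) = of_nat k2"
  shows "k1 = k2"
proof (rule ccontr)
  assume ne: "k1 \<noteq> k2"
  { fix m n :: nat assume mn: "m < n" "n < p" "(of_nat m :: 'a) = of_nat n"
    hence "CHAR('a) dvd (n - m)" using of_nat_eq_iff_char_dvd[OF mn(1), where 'a='a] by simp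
    hence "p dvd (n - m)" using charp by simp
    moreover have "0 < n - m" "n - m < p" using mn by auto
    ultimately have False using nat_dvd_not_less by blast }
  thus False using assms ne by (metis linorder_neqE_nat)
qed

lemma of_nat_frob: "(of_nat k :: 'a) ^ p = of_nat k"
proof (induction k)
  case 0 show ?case using p2 by simp
next
  case (Suc k)
  have prc: "prime CHAR('a)" using charp pr by simp
  have "(of_nat (Suc k) :: 'a) ^ p = (1 + of_nat k) ^ p" by simp
  also have "\<dots> = 1 ^ p + of_nat k ^ p" by (rule freshmans_dream[OF prc charp[symmetric]])
  finally show ?case using Suc by simp
qed

lemma frob_fixed:
  assumes "(y :: 'a) ^ p = y"
  shows "\<exists>k<p. y = of_nat k"
proof -
  define Q :: "'a poly" where "Q = Polynomial.monom 1 p - [:0, 1:]"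
  have pQ: "poly Q z = z ^ p - z" for z unfolding Q_def by (simp add: poly_monom)
  have cQ: "Polynomial.coeff Q p = 1" unfolding Q_def using p2 by (simp add: coeff_pCons split: nat.split)
  hence Q0: "Q \<noteq> 0" by auto
  have dQ: "degree Q \<le> p"
  proof (rule degree_le, intro allI impI)
    fix i assume "p < i"
    thus "Polynomial.coeff Q i = 0" unfolding Q_def using p2 by (simp add: coeff_pCons split: nat.split)
  qed
  have c1: "card {z. poly Q z = 0} \<le> p" using card_poly_roots_bound[OF Q0] dQ by simp
  have sub: "of_nat ` {..<p} \<subseteq> {z::'a. poly Q z = 0}" using of_nat_frob by (auto simp: pQ)
  have inj: "inj_on (of_nat :: nat \<Rightarrow> 'a) {..<p}" using of_nat_inj_p by (auto simp: inj_on_def)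
  have c2: "card (of_nat ` {..<p} :: 'a set) = p" using card_image[OF inj] by simp
  have "of_nat ` {..<p} = {z::'a. poly Q z = 0}"
  proof (rule card_subset_eq)
    have "p \<le> card {z::'a. poly Q z = 0}" using card_mono[OF _ sub] c2 by simp
    thus "card (of_nat ` {..<p} :: 'a set) = card {z::'a. poly Q z = 0}" using c1 c2 by simp
  qed (use sub in auto)
  moreover have "y \<in> {z. poly Q z = 0}" using assms by (simp add: pQ)
  ultimately show ?thesis by auto
qed

lemma trace_props: "trace_nat p w (y::'a) < p \<and> of_nat (trace_nat p w y) = tsum p w y"
proof -
  have ex: "\<exists>!k. k < p \<and> of_nat k = tsum p w y"
  proof -
    obtain k where "k < p" "tsum p w y = of_nat k" using frob_fixed[OF tsum_frob] by blast
    thus ?thesis using of_nat_inj_p by (intro ex1I[of _ k]) auto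
  qed
  show ?thesis unfolding trace_nat_def tsum_def[symmetric] by (rule theI'[OF ex])
qed

lemma trace_zero: "trace_nat p w (0::'a) = 0"
proof -
  have "tsum p w (0::'a) = 0" unfolding tsum_def
    by (intro sum.neutral ballI) (use p2 in \<open>simp add: power_0_left\<close>)
  hence "(of_nat (trace_nat p w (0::'a)) :: 'a) = of_nat 0" using trace_props[of 0] by simp
  thus ?thesis using of_nat_inj_p trace_props[of 0] p2 by auto
qed

lemma fiber_card: "card {y::'a. tsum p w y = c} \<le> p ^ (w - 1)"
proof -
  define Q :: "'a poly" where "Q = (\<Sum>i<w. Polynomial.monom 1 (p ^ i)) - [:c:]"
  have pQ: "poly Q z = tsum p w z - c" for z
    unfolding Q_def tsum_def by (simp add: poly_sum poly_monom)
  have pinj: "p ^ i = p ^ j \<longleftrightarrow> i = j" for i j using p2 by (simp add: power_inject_exp)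
  have cQ: "Polynomial.coeff Q n = (\<Sum>i<w. if p ^ i = n then 1 else 0) - (if n = 0 then c else 0)" for n
    unfolding Q_def by (simp add: coeff_sum coeff_pCons split: nat.split)
  have "Polynomial.coeff Q (p ^ (w - 1)) = (\<Sum>i<w. if i = w - 1 then 1 else 0)"
    unfolding cQ pinj using p2 by simp
  also have "\<dots> = 1" using w1 by simp
  finally have Q0: "Q \<noteq> 0" by auto
  have dQ: "degree Q \<le> p ^ (w - 1)"
  proof (rule degree_le, intro allI impI)
    fix n assume n: "p ^ (w - 1) < n"
    have "p ^ i \<noteq> n" if "i < w" for i
    proof -
      have "p ^ i \<le> p ^ (w - 1)" using that p2 by (intro power_increasing) auto
      thus ?thesis using n by simp
    qed
    moreover have "n \<noteq> 0" using n by simp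
    ultimately show "Polynomial.coeff Q n = 0" unfolding cQ by simp
  qed
  have "{y::'a. tsum p w y = c} = {z. poly Q z = 0}" by (auto simp: pQ)
  thus ?thesis using card_poly_roots_bound[OF Q0] dQ by simp
qed

end
lemma sin_tangent:
  fixes x c :: real
  assumes "0 \<le> x" "x \<le> pi" "0 \<le> c" "c \<le> pi"
  shows "sin x \<le> sin c + cos c * (x - c)"
proof (cases "c \<le> x")
  case True
  have "(\<lambda>t. sin c + cos c * (t - c) - sin t) c \<le> (\<lambda>t. sin c + cos c * (t - c) - sin t) x"
    by (rule incr_piece[where u=c and v=pi and f'="\<lambda>t. cos c - cos t"])
       (use True assms in \<open>auto intro!: derivative_eq_intros simp: cos_mono_le_eq\<close>)
  thus ?thesis by simp
next
  case False
  have "(\<lambda>t. - (sin c + cos c * (t - c) - sin t)) x \<le> (\<lambda>t. - (sin c + cos c * (t - c) - sin t)) c"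
    by (rule incr_piece[where u=0 and v=c and f'="\<lambda>t. cos t - cos c"])
       (use False assms in \<open>auto intro!: derivative_eq_intros simp: cos_mono_le_eq\<close>)
  thus ?thesis by simp
qed

lemma jensen_sin:
  fixes x :: "'b \<Rightarrow> real"
  assumes "finite S" "S \<noteq> {}" "\<And>s. s \<in> S \<Longrightarrow> 0 \<le> x s \<and> x s \<le> pi"
  shows "(\<Sum>s\<in>S. sin (x s)) \<le> card S * sin ((\<Sum>s\<in>S. x s) / card S)"
proof -
  define c where "c = (\<Sum>s\<in>S. x s) / card S"
  have cS: "card S > 0" using assms by (simp add: card_gt_0_iff)
  have c0: "0 \<le> c" unfolding c_def using assms by (intro divide_nonneg_pos sum_nonneg) auto
  have c1: "c \<le> pi"
  proof -
    have "(\<Sum>s\<in>S. x s) \<le> (\<Sum>s\<in>S. pi)" using assms by (intro sum_mono) auto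
    thus ?thesis unfolding c_def using cS by (simp add: divide_le_eq mult.commute)
  qed
  have "(\<Sum>s\<in>S. sin (x s)) \<le> (\<Sum>s\<in>S. sin c + cos c * (x s - c))"
    using assms c0 c1 by (intro sum_mono sin_tangent) auto
  also have "\<dots> = card S * sin c + cos c * ((\<Sum>s\<in>S. x s) - card S * c)"
    by (simp add: sum.distrib sum_subtractf sum_distrib_left algebra_simps)
  also have "(\<Sum>s\<in>S. x s) - card S * c = 0" unfolding c_def using cS by simp
  finally show ?thesis unfolding c_def by simp
qed


context ffield
begin

lemma fiber_alpha:
  assumes a0: "(\<alpha>::'a) \<noteq> 0"
  shows "card {x\<in>A. trace_nat p w (\<alpha> * x) = j} \<le> p ^ (w - 1)"
proof -
  have "{x\<in>A. trace_nat p w (\<alpha> * x) = j} \<subseteq> {x. tsum p w (\<alpha> * x) = of_nat j}"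
    using trace_props by auto
  hence "card {x\<in>A. trace_nat p w (\<alpha> * x) = j} \<le> card {x. tsum p w (\<alpha> * x) = (of_nat j :: 'a)}"
    by (intro card_mono) auto
  also have "\<dots> = card ((\<lambda>x. \<alpha> * x) ` {x. tsum p w (\<alpha> * x) = (of_nat j :: 'a)})"
    using a0 by (intro card_image[symmetric]) (auto simp: inj_on_def)
  also have "(\<lambda>x. \<alpha> * x) ` {x. tsum p w (\<alpha> * x) = (of_nat j :: 'a)} = {y. tsum p w y = of_nat j}"
  proof (intro equalityI subsetI)
    fix y assume "y \<in> {y. tsum p w y = (of_nat j :: 'a)}"
    moreover have "y = \<alpha> * (y / \<alpha>)" using a0 by simp
    ultimately show "y \<in> (\<lambda>x. \<alpha> * x) ` {x. tsum p w (\<alpha> * x) = (of_nat j :: 'a)}"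
      by (metis (mono_tags, lifting) image_eqI mem_Collect_eq)
  qed auto
  also have "card \<dots> \<le> p ^ (w - 1)" by (rule fiber_card)
  finally show ?thesis .
qed

lemma sum_fibers:
  fixes f :: "nat \<Rightarrow> 'b::comm_semiring_1" and A :: "'a set"
  shows "(\<Sum>x\<in>A. f (trace_nat p w (\<alpha> * x))) =
         (\<Sum>j<p. of_nat (card {x\<in>A. trace_nat p w (\<alpha> * x) = j}) * f j)"
proof -
  have fA: "finite A" by simp
  have "(\<Sum>x\<in>A. f (trace_nat p w (\<alpha> * x))) =
        (\<Sum>x\<in>A. \<Sum>j<p. if j = trace_nat p w (\<alpha> * x) then f j else 0)"
    using trace_props by (intro sum.cong refl) (simp add: sum.delta)
  also have "\<dots> = (\<Sum>j<p. \<Sum>x\<in>A. if j = trace_nat p w (\<alpha> * x) then f j else 0)"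
    by (rule sum.swap)
  also have "\<dots> = (\<Sum>j<p. of_nat (card {x\<in>A. trace_nat p w (\<alpha> * x) = j}) * f j)"
  proof (intro sum.cong refl)
    fix j
    have "(\<Sum>x\<in>A. if j = trace_nat p w (\<alpha> * x) then f j else 0) =
          (\<Sum>x\<in>{x\<in>A. trace_nat p w (\<alpha> * x) = j}. f j)"
      by (subst sum.inter_filter[OF fA]) (auto intro!: sum.cong)
    also have "\<dots> = of_nat (card {x\<in>A. trace_nat p w (\<alpha> * x) = j}) * f j" by simp
    finally show "(\<Sum>x\<in>A. if j = trace_nat p w (\<alpha> * x) then f j else 0) =
          of_nat (card {x\<in>A. trace_nat p w (\<alpha> * x) = j}) * f j" .
  qed
  finally show ?thesis .
qed

lemma layer:
  fixes z :: "'b::comm_semiring_1"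
  assumes "c \<le> M"
  shows "of_nat c * z = (\<Sum>t\<in>{1..M}. if t \<le> c then z else 0)"
proof -
  have "(\<Sum>t\<in>{1..M}. if t \<le> c then z else 0) = (\<Sum>t\<in>{t\<in>{1..M}. t \<le> c}. z)"
    by (subst sum.inter_filter) auto
  also have "{t\<in>{1..M}. t \<le> c} = {1..c}" using assms by auto
  finally show ?thesis by simp
qed

lemma fourier_ind: "fourier p w (ind A) \<alpha> =
   (1 / of_nat (p ^ w)) * (\<Sum>x\<in>A. omega p ^ trace_nat p w (\<alpha> * x))"
proof -
  have "(\<Sum>x\<in>UNIV. ind A x * omega p ^ trace_nat p w (\<alpha> * x)) =
        (\<Sum>x\<in>UNIV. if x \<in> A then omega p ^ trace_nat p w (\<alpha> * x) else 0)"
    unfolding ind_def by (intro sum.cong) auto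
  also have "\<dots> = (\<Sum>x\<in>A. omega p ^ trace_nat p w (\<alpha> * x))"
    by (subst sum.inter_filter[symmetric]) auto
  finally show ?thesis unfolding fourier_def by simp
qed

lemma main_bound:
  fixes A :: "nat \<Rightarrow> 'a set" and I :: "nat set" and \<alpha> :: 'a and k :: nat
  assumes a0: "\<alpha> \<noteq> 0" and fI: "finite I" and cI: "card I = k" and k1: "k \<ge> 1"
    and tot: "(\<Sum>i\<in>I. card (A i)) = p ^ w"
  shows "(\<Sum>i\<in>I. cmod (fourier p w (ind (A i)) \<alpha>)) \<le> (k * sin (pi / k)) / (p * sin (pi / p))"
proof -
  define M where "M = p ^ (w - 1)"
  have pM: "p ^ w = p * M" unfolding M_def using w1 by (metis Suc_diff_1 less_le_trans power_Suc zero_less_one)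
  have M1: "M \<ge> 1" unfolding M_def using p2 by simp
  define c where "c = (\<lambda>i j. card {x\<in>A i. trace_nat p w (\<alpha> * x) = j})"
  have cM: "c i j \<le> M" for i j unfolding c_def M_def by (rule fiber_alpha[OF a0])
  define L where "L = (\<lambda>i t. {j\<in>{..<p}. t \<le> c i j})"
  define g where "g = (\<lambda>m::nat. sin (pi * m / p) / sin (pi / p))"
  define S where "S = (\<lambda>i. \<Sum>x\<in>A i. omega p ^ trace_nat p w (\<alpha> * x))"
  have S_eq: "S i = (\<Sum>t\<in>{1..M}. \<Sum>j\<in>L i t. omega p ^ j)" for i
  proof -
    have "S i = (\<Sum>j<p. of_nat (c i j) * omega p ^ j)"
      unfolding S_def c_def by (rule sum_fibers)
    also have "\<dots> = (\<Sum>j<p. \<Sum>t\<in>{1..M}. if t \<le> c i j then omega p ^ j else 0)"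
      using cM by (intro sum.cong refl layer)
    also have "\<dots> = (\<Sum>t\<in>{1..M}. \<Sum>j<p. if t \<le> c i j then omega p ^ j else 0)"
      by (rule sum.swap)
    also have "\<dots> = (\<Sum>t\<in>{1..M}. \<Sum>j\<in>L i t. omega p ^ j)"
      unfolding L_def
    proof (rule sum.cong[OF refl])
      fix t
      show "(\<Sum>j<p. if t \<le> c i j then omega p ^ j else 0) = (\<Sum>j\<in>{j\<in>{..<p}. t \<le> c i j}. omega p ^ j)"
        by (rule sum.inter_filter[symmetric]) simp
    qed
    finally show ?thesis .
  qed
  have S_le: "cmod (S i) \<le> (\<Sum>t\<in>{1..M}. g (card (L i t)))" for i
  proof -
    have "cmod (S i) \<le> (\<Sum>t\<in>{1..M}. cmod (\<Sum>j\<in>L i t. omega p ^ j))"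
      unfolding S_eq by (rule norm_sum)
    also have "\<dots> \<le> (\<Sum>t\<in>{1..M}. g (card (L i t)))"
      unfolding g_def using p2 by (intro sum_mono root_subset_bound) (auto simp: L_def)
    finally show ?thesis .
  qed
  have cardA: "card (A i) = (\<Sum>t\<in>{1..M}. card (L i t))" for i
  proof -
    have "card (A i) = (\<Sum>x\<in>A i. (\<lambda>_. 1::nat) (trace_nat p w (\<alpha> * x)))" by simp
    also have "\<dots> = (\<Sum>j<p. c i j)" unfolding c_def by (subst sum_fibers) simp
    also have "\<dots> = (\<Sum>j<p. \<Sum>t\<in>{1..M}. if t \<le> c i j then 1 else 0)"
      using cM by (intro sum.cong refl) (metis layer mult.right_neutral of_nat_id)
    also have "\<dots> = (\<Sum>t\<in>{1..M}. \<Sum>j<p. if t \<le> c i j then 1 else 0)" by (rule sum.swap)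
    also have "\<dots> = (\<Sum>t\<in>{1..M}. card (L i t))"
      unfolding L_def
    proof (rule sum.cong[OF refl])
      fix t
      have "(\<Sum>j<p. if t \<le> c i j then 1 else 0) = (\<Sum>j\<in>{j\<in>{..<p}. t \<le> c i j}. 1::nat)"
        by (rule sum.inter_filter[symmetric]) simp
      thus "(\<Sum>j<p. if t \<le> c i j then 1 else 0) = card {j\<in>{..<p}. t \<le> c i j}" by simp
    qed
    finally show ?thesis .
  qed
  have Lp: "card (L i t) \<le> p" for i t
    using card_mono[of "{..<p}" "L i t"] unfolding L_def by auto
  define X where "X = (\<lambda>it::nat\<times>nat. pi * card (L (fst it) (snd it)) / p)"
  have pp: "real p > 0" using p2 by simp
  have sp: "sin (pi / p) > 0" using p2 by (intro sin_gt_zero) (auto simp: field_simps)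
  have Xr: "0 \<le> X it \<and> X it \<le> pi" for it
  proof -
    have "pi * card (L (fst it) (snd it)) / p \<le> pi * p / p"
      using Lp pp by (intro divide_right_mono mult_left_mono) auto
    thus ?thesis unfolding X_def using pp by simp
  qed
  have fIT: "finite (I \<times> {1..M})" using fI by simp
  have cIT: "card (I \<times> {1..M}) = k * M" using cI by (simp add: card_cartesian_product)
  have neIT: "I \<times> {1..M} \<noteq> {}" using cIT k1 M1 by (metis card.empty mult_is_0 not_one_le_zero)
  have sumX: "(\<Sum>it\<in>I \<times> {1..M}. X it) = pi * M"
  proof -
    have "(\<Sum>it\<in>I \<times> {1..M}. X it) = (\<Sum>i\<in>I. \<Sum>t\<in>{1..M}. pi * card (L i t) / p)"
      unfolding X_def by (simp add: sum.cartesian_product case_prod_beta)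
    also have "\<dots> = pi / p * (\<Sum>i\<in>I. real (\<Sum>t\<in>{1..M}. card (L i t)))"
      by (simp add: sum_distrib_left)
    also have "\<dots> = pi / p * real (p ^ w)" unfolding cardA[symmetric] tot[symmetric] by simp
    also have "\<dots> = pi * M" unfolding pM using pp by simp
    finally show ?thesis .
  qed
  have "(\<Sum>i\<in>I. cmod (S i)) \<le> (\<Sum>i\<in>I. \<Sum>t\<in>{1..M}. g (card (L i t)))"
    by (intro sum_mono S_le)
  also have "\<dots> = (\<Sum>it\<in>I \<times> {1..M}. sin (X it)) / sin (pi / p)"
    unfolding g_def X_def by (simp add: sum.cartesian_product sum_divide_distrib case_prod_beta)
  also have "\<dots> \<le> (card (I \<times> {1..M}) * sin ((\<Sum>it\<in>I \<times> {1..M}. X it) / card (I \<times> {1..M}))) / sin (pi / p)"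
    using sp by (intro divide_right_mono jensen_sin[OF fIT neIT] Xr) auto
  also have "\<dots> = (k * M * sin (pi / k)) / sin (pi / p)"
    unfolding cIT sumX using M1 k1 by simp
  finally have tot_le: "(\<Sum>i\<in>I. cmod (S i)) \<le> (k * M * sin (pi / k)) / sin (pi / p)" .
  have "(\<Sum>i\<in>I. cmod (fourier p w (ind (A i)) \<alpha>)) = (\<Sum>i\<in>I. cmod (S i)) / (p * M)"
  proof -
    have "cmod (fourier p w (ind (A i)) \<alpha>) = cmod (S i) / (p * M)" for i
    proof -
      have "cmod (fourier p w (ind (A i)) \<alpha>) = cmod (1 / of_nat (p * M)) * cmod (S i)"
        unfolding fourier_ind S_def pM by (rule norm_mult)
      also have "cmod (1 / of_nat (p * M) :: complex) = 1 / (p * M)"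
        by (simp add: norm_divide norm_mult)
      finally show ?thesis by simp
    qed
    thus ?thesis by (simp add: sum_divide_distrib)
  qed
  also have "\<dots> \<le> ((k * M * sin (pi / k)) / sin (pi / p)) / (p * M)"
    using M1 pp by (intro divide_right_mono tot_le) auto
  also have "\<dots> = (k * sin (pi / k)) / (p * sin (pi / p))" using M1 by (simp add: field_simps)
  finally show ?thesis .
qed

lemma zero_part:
  fixes A :: "nat \<Rightarrow> 'a set" and I :: "nat set"
  assumes tot: "(\<Sum>i\<in>I. card (A i)) = p ^ w"
  shows "(\<Sum>i\<in>I. cmod (fourier p w (ind (A i)) 0)) = 1"
proof -
  have "fourier p w (ind (A i)) 0 = of_nat (card (A i)) / of_nat (p ^ w)" for i
    unfolding fourier_ind using trace_zero by simp
  hence "(\<Sum>i\<in>I. cmod (fourier p w (ind (A i)) 0)) = (\<Sum>i\<in>I. real (card (A i)) / real (p ^ w))"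
    by (simp add: norm_divide norm_power)
  also have "\<dots> = real (\<Sum>i\<in>I. card (A i)) / real (p ^ w)" by (simp add: sum_divide_distrib)
  also have "\<dots> = 1" unfolding tot using p2 by simp
  finally show ?thesis .
qed

end

theorem lemma4p4:
  fixes p w :: nat and \<mu> :: real and A :: "nat \<Rightarrow> 'a::{field,finite} set"
  assumes "prime p" and "w \<ge> 1" and "CARD('a) = p ^ w"
    and "\<mu> > 0" and "2 powr \<mu> \<in> \<int>"
    and "(\<Sum>i\<in>{1..nat \<lfloor>2 powr \<mu>\<rfloor>}. card (A i)) = p ^ w"
  shows "(\<forall>\<alpha>::'a. \<alpha> \<noteq> 0 \<longrightarrow>
           (\<Sum>i\<in>{1..nat \<lfloor>2 powr \<mu>\<rfloor>}. cmod (fourier p w (ind (A i)) \<alpha>))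
             \<le> (2 powr \<mu> * sin (pi / 2 powr \<mu>)) / (real p * sin (pi / real p)))
       \<and> (\<Sum>i\<in>{1..nat \<lfloor>2 powr \<mu>\<rfloor>}. cmod (fourier p w (ind (A i)) 0)) = 1"
proof -
  interpret ffield p w "TYPE('a)" using assms(1-3) by unfold_locales
  obtain n where n: "2 powr \<mu> = of_int n" using assms(5) Ints_cases by blast
  have "2 powr \<mu> > 1" using assms(4) by simp
  hence n1: "n \<ge> 1" using n by simp
  define k where "k = nat \<lfloor>2 powr \<mu>\<rfloor>"
  have kr: "real k = 2 powr \<mu>" unfolding k_def n using n1 by simp
  have k1: "k \<ge> 1" unfolding k_def n using n1 by simp
  show ?thesis
  proof (intro conjI allI impI)
    fix \<alpha> :: 'a assume "\<alpha> \<noteq> 0"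
    have "(\<Sum>i\<in>{1..k}. cmod (fourier p w (ind (A i)) \<alpha>)) \<le> (k * sin (pi / k)) / (p * sin (pi / p))"
      by (rule main_bound[OF \<open>\<alpha> \<noteq> 0\<close> _ _ k1]) (use assms(6) in \<open>auto simp: k_def\<close>)
    thus "(\<Sum>i\<in>{1..nat \<lfloor>2 powr \<mu>\<rfloor>}. cmod (fourier p w (ind (A i)) \<alpha>))
             \<le> (2 powr \<mu> * sin (pi / 2 powr \<mu>)) / (real p * sin (pi / real p))"
      by (simp add: k_def[symmetric] kr)
  next
    show "(\<Sum>i\<in>{1..nat \<lfloor>2 powr \<mu>\<rfloor>}. cmod (fourier p w (ind (A i)) 0)) = 1"
      by (rule zero_part[OF assms(6)])
  qed
qed

end
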